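(* Define $\mathrm{Mex}(F)=\min(\mathbb{N}_0\setminus F)$ for $F\subseteq\mathbb{N}_0$, and $a+D=\{a+d:d\in D\}$. Define triples $v(n)=(v_1(n),v_2(n),v_3(n))$, $n\ge 0$, recursively by $v(0)=(0,0,0)$ and, for $n\ge 0$, with $F_n=\{v_i(k): 0\le k\le n,\ i\in\{1,2,3\}\}$ and $D_n=\bigcup_{k=0}^{n}\{v_2(k)-v_1(k),\,v_3(k)-v_2(k),\,v_3(k)-v_1(k)\}$, \[ v_1(n+1)=\mathrm{Mex}(F_n),\quad v_2(n+1)=\mathrm{Mex}\big((v_1(n+1)+D_n)\cup\{1,\dots,v_1(n+1)\}\cup F_n\big), \] \[ v_3(n+1)=\mathrm{Mex}\big((v_2(n+1)+D_n)\cup\{1,\dots,v_2(n+1)\}\cup F_n\big). \] For a finite set $K=\{k_1<k_2<\dots<k_\ell\}\subseteq\mathbb{N}_0$ let $\mathrm{Gap}(K)=\min\{k_{i+1}-k_i: 1\le i\le \ell-1\}$ if $\ell\ge 2$ and $\mathrm{Gap}(K)=\infty$ if $\ell\le 1$. Then for every $n\ge 1$: (a) $v_i(n)-v_i(n-1)\ge i$ for $i=1,2,3$; (b) $v_3(n)-v_1(n)\ge v_3(n-1)-v_1(n-1)+2$; (c) $\mathrm{Gap}(D_{n-1}\cap[\mathrm{Mex}(D_{n-1}),\infty))\ge 2$; (d) $\mathrm{Gap}(F_{n-1}\cap[\mathrm{Mex}(F_{n-1})+\mathrm{Mex}(D_{n-1}),\infty))\ge 3$; (e) $\max F_n=v_3(n)=v_2(n)+\mathrm{Mex}(D_{n-1})$;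 (f) $\max D_n=v_3(n)-v_1(n)$.
   Context: $\mathbb{N}_0$ denotes the nonnegative integers. The triples $v(n)$ are the (sorted) P-positions of the 3D Wythoff $L^1$-Nim game. *)

theory Defs
  imports Main "HOL-Library.Extended_Nat"
begin

definition Mex :: "nat set \<Rightarrow> nat" where
  "Mex F = (LEAST m. m \<notin> F)"

definition plus_set :: "nat \<Rightarrow> nat set \<Rightarrow> nat set" where
  "plus_set a D = (\<lambda>d. a + d) ` D"

type_synonym triple = "nat \<times> nat \<times> nat"

definition c1 :: "triple \<Rightarrow> nat" where "c1 t = fst t"
definition c2 :: "triple \<Rightarrow> nat" where "c2 t = fst (snd t)"
definition c3 :: "triple \<Rightarrow> nat" where "c3 t = snd (snd t)"

definition Fset :: "triple list \<Rightarrow> nat set" where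
  "Fset vs = (\<Union>t\<in>set vs. {c1 t, c2 t, c3 t})"

definition Dset :: "triple list \<Rightarrow> nat set" where
  "Dset vs = (\<Union>t\<in>set vs. {c2 t - c1 t, c3 t - c2 t, c3 t - c1 t})"

definition next_triple :: "triple list \<Rightarrow> triple" where
  "next_triple vs =
     (let F = Fset vs; D = Dset vs;
          a = Mex F;
          b = Mex (plus_set a D \<union> {1..a} \<union> F);
          c = Mex (plus_set b D \<union> {1..b} \<union> F)
      in (a, b, c))"

fun vlist :: "nat \<Rightarrow> triple list" where
  "vlist 0 = [(0,0,0)]"
| "vlist (Suc n) = vlist n @ [next_triple (vlist n)]"

definition v :: "nat \<Rightarrow> triple" where "v n = vlist n ! n"
definition v1 :: "nat \<Rightarrow> nat" where "v1 n = c1 (v n)"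
definition v2 :: "nat \<Rightarrow> nat" where "v2 n = c2 (v n)"
definition v3 :: "nat \<Rightarrow> nat" where "v3 n = c3 (v n)"

definition F :: "nat \<Rightarrow> nat set" where
  "F n = {v1 k | k. k \<le> n} \<union> {v2 k | k. k \<le> n} \<union> {v3 k | k. k \<le> n}"

definition D :: "nat \<Rightarrow> nat set" where
  "D n = (\<Union>k\<in>{0..n}. {v2 k - v1 k, v3 k - v2 k, v3 k - v1 k})"

definition Gap :: "nat set \<Rightarrow> enat" where
  "Gap K = (let ks = sorted_list_of_set K in
     if length ks \<le> 1 then \<infinity>
     else enat (Min {ks ! (i+1) - ks ! i | i. i + 1 < length ks}))"

end

theory Submission
  imports Defs
begin

lemma Mex_notin: "finite S \<Longrightarrow> Mex S \<notin> S"
  unfolding Mex_def by (rule LeastI_ex) (meson ex_new_if_finite infinite_UNIV_nat)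

lemma Mex_less: "y < Mex S \<Longrightarrow> y \<in> S"
  unfolding Mex_def using not_less_Least by blast

lemma Mex_le: "y \<notin> S \<Longrightarrow> Mex S \<le> y"
  unfolding Mex_def by (rule Least_le)

lemma Mex_eq: "m \<notin> S \<Longrightarrow> (\<And>y. y < m \<Longrightarrow> y \<in> S) \<Longrightarrow> Mex S = m"
  unfolding Mex_def by (rule Least_equality) (auto simp: not_le[symmetric])

lemma Mex_gt: "(\<And>y. y \<le> m \<Longrightarrow> y \<in> S) \<Longrightarrow> finite S \<Longrightarrow> m < Mex S"
  using Mex_notin by (metis not_less)

lemma finite_Fset: "finite (Fset L)" unfolding Fset_def by auto
lemma finite_Dset: "finite (Dset L)" unfolding Dset_def by auto

lemma Fset_snoc: "Fset (L @ [t]) = Fset L \<union> {c1 t, c2 t, c3 t}"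
  unfolding Fset_def by auto
lemma Dset_snoc: "Dset (L @ [t]) = Dset L \<union> {c2 t - c1 t, c3 t - c2 t, c3 t - c1 t}"
  unfolding Dset_def by auto

lemma length_vlist: "length (vlist n) = Suc n"
  by (induction n) auto

lemma vlist_nth: "k \<le> n \<Longrightarrow> vlist n ! k = v k"
proof (induction n)
  case 0 then show ?case by (simp add: v_def)
next
  case (Suc n)
  show ?case
  proof (cases "k \<le> n")
    case True then show ?thesis using Suc by (simp add: nth_append length_vlist)
  next
    case False then have "k = Suc n" using Suc by simp
    then show ?thesis by (simp add: v_def)
  qed
qed

lemma set_vlist: "set (vlist n) = v ` {0..n}"
proof -
  have "set (vlist n) = {vlist n ! i | i. i < Suc n}" by (simp add: set_conv_nth length_vlist)
  also have "\<dots> = v ` {0..n}"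
  proof
    show "{vlist n ! i | i. i < Suc n} \<subseteq> v ` {0..n}"
    proof
      fix y assume "y \<in> {vlist n ! i | i. i < Suc n}"
      then obtain i where i: "y = vlist n ! i" "i < Suc n" by blast
      then have "y = v i" "i \<in> {0..n}" using vlist_nth[of i n] by auto
      then show "y \<in> v ` {0..n}" by blast
    qed
    show "v ` {0..n} \<subseteq> {vlist n ! i | i. i < Suc n}"
    proof
      fix y assume "y \<in> v ` {0..n}"
      then obtain k where k: "k \<le> n" "y = v k" by auto
      then have "y = vlist n ! k \<and> k < Suc n" using vlist_nth[of k n] by simp
      then show "y \<in> {vlist n ! i | i. i < Suc n}" by blast
    qed
  qed
  finally show ?thesis .
qed

lemma F_eq: "F n = Fset (vlist n)"
  unfolding F_def Fset_def set_vlist v1_def v2_def v3_def by auto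

lemma D_eq: "D n = Dset (vlist n)"
  unfolding D_def Dset_def set_vlist v1_def v2_def v3_def by auto

lemma last_vlist: "last (vlist n) = v n"
  by (cases n) (auto simp: v_def nth_append length_vlist)

lemma v_Suc: "v (Suc n) = next_triple (vlist n)"
  by (simp add: v_def nth_append length_vlist)

lemma Gap_ge:
  assumes "finite K" "\<And>x y. x \<in> K \<Longrightarrow> y \<in> K \<Longrightarrow> x < y \<Longrightarrow> x + g \<le> y"
  shows "enat g \<le> Gap K"
proof -
  define ks where "ks = sorted_list_of_set K"
  have sk: "sorted_wrt (<) ks" using assms(1) unfolding ks_def by simp
  have sks: "set ks = K" using assms(1) unfolding ks_def by simp
  show ?thesis
  proof (cases "length ks \<le> 1")
    case True then show ?thesis unfolding Gap_def ks_def[symmetric] by simp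
  next
    case False
    have "g \<le> Min {ks ! (i+1) - ks ! i | i. i + 1 < length ks}"
    proof (rule Min.boundedI)
      show "finite {ks ! (i+1) - ks ! i | i. i + 1 < length ks}"
        by (rule finite_subset[of _ "(\<lambda>i. ks!(i+1) - ks!i) ` {..<length ks}"]) auto
      show "{ks ! (i+1) - ks ! i | i. i + 1 < length ks} \<noteq> {}" using False by (auto intro!: exI[of _ 0])
      fix z assume "z \<in> {ks ! (i+1) - ks ! i | i. i + 1 < length ks}"
      then obtain i where i: "i + 1 < length ks" "z = ks ! (i+1) - ks ! i" by auto
      have lt: "ks ! i < ks ! (i+1)" using sk i(1) by (simp add: sorted_wrt_iff_nth_less)
      have "ks ! i \<in> K" "ks ! (i+1) \<in> K" using i(1) sks by auto
      then have "ks ! i + g \<le> ks ! (i+1)" using assms(2) lt by blast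
      then show "g \<le> z" using i(2) by simp
    qed
    then show ?thesis using False unfolding Gap_def ks_def[symmetric] by (simp add: Let_def)
  qed
qed


definition Inv :: "triple list \<Rightarrow> bool" where
"Inv L \<longleftrightarrow> (\<forall>u1 u2 u3. last L = (u1,u2,u3) \<longrightarrow>
   u1 < Mex (Fset L) \<and> u2 - u1 < Mex (Dset L) \<and> u1 \<le> u2 \<and> u2 \<le> u3 \<and> u3 - u2 \<le> u2 - u1 \<and>
   (\<forall>x\<in>Fset L. x \<le> u3) \<and> (\<forall>x\<in>Dset L. x \<le> u3 - u1) \<and>
   (\<forall>x\<in>Dset L. \<forall>y\<in>Dset L. Mex (Dset L) \<le> x \<and> x < y \<longrightarrow> x + 2 \<le> y) \<and>
   (\<forall>x\<in>Fset L. \<forall>y\<in>Fset L. Mex (Fset L) + Mex (Dset L) \<le> x \<and> x < y \<longrightarrow> x + 3 \<le> y))"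

lemma Inv0: "Inv [(0,0,0)]"
proof -
  have F: "Fset [(0,0,0)] = {0}" and D: "Dset [(0,0,0)] = {0}"
    by (auto simp: Fset_def Dset_def c1_def c2_def c3_def)
  have "Mex {0} = 1" by (rule Mex_eq) auto
  then show ?thesis unfolding Inv_def F D by auto
qed

lemma step:
  assumes inv: "Inv L" and lst: "last L = (u1,u2,u3)" and nt: "next_triple L = (a,b,c)"
  shows "u1 < a \<and> u2 + 2 \<le> b \<and> u3 + 3 \<le> c \<and> u3 - u1 + 2 \<le> c - a \<and> c = b + Mex (Dset L)
     \<and> Inv (L @ [(a,b,c)])"
proof -
  define FF where "FF = Fset L"
  define DD where "DD = Dset L"
  define \<alpha> where "\<alpha> = Mex FF"
  define \<delta> where "\<delta> = Mex DD"
  have finF: "finite FF" and finD: "finite DD" unfolding FF_def DD_def by (auto simp: finite_Fset finite_Dset)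
  have I: "u1 < \<alpha>" "u2 - u1 < \<delta>" "u1 \<le> u2" "u2 \<le> u3" "u3 - u2 \<le> u2 - u1"
     "\<And>x. x\<in>FF \<Longrightarrow> x \<le> u3" "\<And>x. x\<in>DD \<Longrightarrow> x \<le> u3 - u1"
     "\<And>x y. x\<in>DD \<Longrightarrow> y\<in>DD \<Longrightarrow> \<delta> \<le> x \<Longrightarrow> x < y \<Longrightarrow> x + 2 \<le> y"
     "\<And>x y. x\<in>FF \<Longrightarrow> y\<in>FF \<Longrightarrow> \<alpha> + \<delta> \<le> x \<Longrightarrow> x < y \<Longrightarrow> x + 3 \<le> y"
    using inv lst unfolding Inv_def FF_def[symmetric] DD_def[symmetric] \<alpha>_def[symmetric] \<delta>_def[symmetric]
    by blast+
  have \<delta>D: "\<delta> \<notin> DD" unfolding \<delta>_def using finD by (rule Mex_notin)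
  have ltD: "\<And>x. x < \<delta> \<Longrightarrow> x \<in> DD" unfolding \<delta>_def by (rule Mex_less)
  have \<alpha>F: "\<alpha> \<notin> FF" unfolding \<alpha>_def using finF by (rule Mex_notin)
  have ltF: "\<And>x. x < \<alpha> \<Longrightarrow> x \<in> FF" unfolding \<alpha>_def by (rule Mex_less)
  have zF: "0 \<in> FF" using ltF I(1) by simp
  define Sb where "Sb = plus_set a DD \<union> {1..a} \<union> FF"
  define Sc where "Sc = plus_set b DD \<union> {1..b} \<union> FF"
  have abc: "a = \<alpha>" "b = Mex Sb" "c = Mex Sc"
    using nt unfolding next_triple_def Let_def Sb_def Sc_def FF_def DD_def \<alpha>_def by auto
  have finSb: "finite Sb" unfolding Sb_def plus_set_def using finD finF by auto
  have finSc: "finite Sc" unfolding Sc_def plus_set_def using finD finF by auto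
  have memSb: "\<And>x. (a + x \<in> Sb) = (x = 0 \<or> x \<in> DD \<or> a + x \<in> FF)"
    unfolding Sb_def plus_set_def using zF abc(1) I(1) by auto
  have lowSb: "\<And>y. y \<le> a \<Longrightarrow> y \<in> Sb"
  proof -
    fix y :: nat assume "y \<le> a" then show "y \<in> Sb" unfolding Sb_def using zF by (cases "y = 0") auto
  qed
  have lowSc: "\<And>y. y \<le> b \<Longrightarrow> y \<in> Sc"
  proof -
    fix y :: nat assume "y \<le> b" then show "y \<in> Sc" unfolding Sc_def using zF by (cases "y = 0") auto
  qed
  have bSb: "b \<notin> Sb" using abc(2) finSb Mex_notin by simp
  have ltSb: "\<And>y. y < b \<Longrightarrow> y \<in> Sb" using abc(2) Mex_less by simp
  have ab: "a < b" using bSb lowSb by (meson not_less)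
  have memSc: "\<And>x. (b + x \<in> Sc) = (x = 0 \<or> x \<in> DD \<or> b + x \<in> FF)"
    unfolding Sc_def plus_set_def using zF ab by auto
  define d where "d = b - a"
  have bd: "b = a + d" using ab d_def by simp
  have dD: "d \<notin> DD" and dF: "b \<notin> FF" and d0: "d \<noteq> 0" using bSb memSb bd by auto
  have blocked: "\<And>x. x < d \<Longrightarrow> x = 0 \<or> x \<in> DD \<or> a + x \<in> FF"
    using ltSb bd memSb by (metis add_less_cancel_left)
  have d_ge: "\<delta> \<le> d"
  proof (rule ccontr)
    assume "\<not> \<delta> \<le> d" then have "d \<in> DD" using ltD by simp
    then show False using dD by simp
  qed
  have \<delta>pos: "0 < \<delta>" using I(2) by simp
  have aF: "d > \<delta> \<Longrightarrow> a + \<delta> \<in> FF" using blocked[of \<delta>] \<delta>D \<delta>pos by auto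
  have d_le: "d \<le> \<delta> + 2"
  proof (rule ccontr)
    assume "\<not> d \<le> \<delta> + 2"
    then have h: "a + \<delta> \<in> FF" "\<delta>+1 < d" "\<delta>+2 < d" using aF by auto
    have n1: "a + (\<delta>+1) \<notin> FF" using I(9)[OF h(1)] abc(1) by fastforce
    have n2: "a + (\<delta>+2) \<notin> FF" using I(9)[OF h(1)] abc(1) by fastforce
    have "\<delta>+1 \<in> DD" "\<delta>+2 \<in> DD" using blocked[OF h(2)] blocked[OF h(3)] n1 n2 by auto
    then show False using I(8)[of "\<delta>+1" "\<delta>+2"] by simp
  qed
  have mid: "\<And>x. \<delta> < x \<Longrightarrow> x < d \<Longrightarrow> x \<in> DD"
  proof -
    fix x assume x: "\<delta> < x" "x < d"
    have h: "a + \<delta> \<in> FF" using aF x by simp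
    have "a + x \<notin> FF" using I(9)[OF h] abc(1) x d_le by fastforce
    then show "x \<in> DD" using blocked[OF x(2)] x by auto
  qed
  have u2b: "u2 + 2 \<le> b" using I(1) I(2) d_ge bd abc(1) by linarith
  have c_eq: "c = b + \<delta>"
    unfolding abc(3)
  proof (rule Mex_eq)
    have "b + \<delta> \<notin> FF" using I(6) I(5) I(2) u2b by fastforce
    then show "b + \<delta> \<notin> Sc" using memSc[of \<delta>] \<delta>D \<delta>pos by simp
    fix y assume y: "y < b + \<delta>"
    show "y \<in> Sc"
    proof (cases "y \<le> b")
      case True then show ?thesis by (rule lowSc)
    next
      case False
      then have "y - b \<in> DD" using ltD y by simp
      then show ?thesis using memSc[of "y - b"] False by simp
    qed
  qed
  have u3c: "u3 + 3 \<le> c" using c_eq u2b I(5) I(2) by linarith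
  have ca: "u3 - u1 + 2 \<le> c - a" using c_eq bd I(2) I(5) I(3) I(4) d_ge by linarith
  define F' where "F' = Fset (L @ [(a,b,c)])"
  define D' where "D' = Dset (L @ [(a,b,c)])"
  have F'eq: "F' = FF \<union> {a,b,c}" unfolding F'_def FF_def Fset_snoc by (simp add: c1_def c2_def c3_def)
  have D'eq: "D' = DD \<union> {d,\<delta>,c-a}" unfolding D'_def DD_def Dset_snoc using bd c_eq
    by (auto simp: c1_def c2_def c3_def)
  have finF': "finite F'" and finD': "finite D'" unfolding F'_def D'_def by (auto simp: finite_Fset finite_Dset)
  have \<alpha>': "a < Mex F'"
    by (rule Mex_gt[OF _ finF']) (use ltF abc(1) F'eq in \<open>auto simp: le_less\<close>)
  have \<delta>': "d < Mex D'"
  proof (rule Mex_gt[OF _ finD'])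
    fix y assume y: "y \<le> d"
    show "y \<in> D'"
    proof -
      consider "y < \<delta>" | "y = \<delta>" | "\<delta> < y \<and> y < d" | "y = d" using y by linarith
      then show ?thesis using ltD mid D'eq by cases auto
    qed
  qed
  have last': "last (L @ [(a,b,c)]) = (a,b,c)" by simp
  have "Inv (L @ [(a,b,c)])"
    unfolding Inv_def last' F'_def[symmetric] D'_def[symmetric]
  proof (intro allI impI)
    fix w1 w2 w3 assume "(a,b,c) = (w1,w2,w3)"
    then have w: "w1 = a" "w2 = b" "w3 = c" by auto
    have g1: "\<forall>x\<in>F'. x \<le> c" using F'eq I(6) u3c ab c_eq by fastforce
    have g2: "\<forall>x\<in>D'. x \<le> c - a" using D'eq I(7) ca bd c_eq by fastforce
    have g3: "\<forall>x\<in>D'. \<forall>y\<in>D'. Mex D' \<le> x \<and> x < y \<longrightarrow> x + 2 \<le> y"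
    proof (intro ballI impI)
      fix x y assume xy: "x \<in> D'" "y \<in> D'" "Mex D' \<le> x \<and> x < y"
      have x: "x \<in> DD \<or> x = c - a" using xy \<delta>' d_ge D'eq by auto
      have y: "y \<in> DD \<or> y = c - a" using xy \<delta>' d_ge D'eq by auto
      show "x + 2 \<le> y"
      proof (cases "y = c - a")
        case True
        then show ?thesis using x xy I(7) ca by fastforce
      next
        case False
        then have "y \<in> DD" using y by simp
        moreover have "x \<in> DD" using x xy `y \<in> DD` I(7) ca by fastforce
        ultimately show ?thesis using I(8) xy \<delta>' d_ge by simp
      qed
    qed
    have g4: "\<forall>x\<in>F'. \<forall>y\<in>F'. Mex F' + Mex D' \<le> x \<and> x < y \<longrightarrow> x + 3 \<le> y"
    proof (intro ballI impI)
      fix x y assume xy: "x \<in> F'" "y \<in> F'" "Mex F' + Mex D' \<le> x \<and> x < y"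
      have thr: "b + 2 \<le> Mex F' + Mex D'" using \<alpha>' \<delta>' bd by linarith
      have x: "x \<in> FF \<or> x = c" using xy thr F'eq ab by auto
      have y: "y \<in> FF \<or> y = c" using xy thr F'eq ab by auto
      show "x + 3 \<le> y"
      proof (cases "y = c")
        case True
        then show ?thesis using x xy I(6) u3c by fastforce
      next
        case False
        then have "y \<in> FF" using y by simp
        moreover have "x \<in> FF" using x xy `y \<in> FF` I(6) u3c by fastforce
        ultimately show ?thesis using I(9) xy \<alpha>' \<delta>' d_ge abc(1) by simp
      qed
    qed
    show "w1 < Mex F' \<and> w2 - w1 < Mex D' \<and> w1 \<le> w2 \<and> w2 \<le> w3 \<and> w3 - w2 \<le> w2 - w1 \<and>
      (\<forall>x\<in>F'. x \<le> w3) \<and> (\<forall>x\<in>D'. x \<le> w3 - w1) \<and>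
      (\<forall>x\<in>D'. \<forall>y\<in>D'. Mex D' \<le> x \<and> x < y \<longrightarrow> x + 2 \<le> y) \<and>
      (\<forall>x\<in>F'. \<forall>y\<in>F'. Mex F' + Mex D' \<le> x \<and> x < y \<longrightarrow> x + 3 \<le> y)"
    proof (intro conjI)
      show "w1 < Mex F'" using w \<alpha>' by simp
      show "w2 - w1 < Mex D'" using w \<delta>' bd by simp
      show "w1 \<le> w2" using w ab by simp
      show "w2 \<le> w3" using w c_eq by simp
      show "w3 - w2 \<le> w2 - w1" using w c_eq bd d_ge by simp
      show "\<forall>x\<in>F'. x \<le> w3" using w g1 by simp
      show "\<forall>x\<in>D'. x \<le> w3 - w1" using w g2 by simp
      show "\<forall>x\<in>D'. \<forall>y\<in>D'. Mex D' \<le> x \<and> x < y \<longrightarrow> x + 2 \<le> y" by (rule g3)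
      show "\<forall>x\<in>F'. \<forall>y\<in>F'. Mex F' + Mex D' \<le> x \<and> x < y \<longrightarrow> x + 3 \<le> y" by (rule g4)
    qed
  qed
  then show ?thesis using I(1) abc(1) u2b u3c ca c_eq DD_def \<delta>_def by simp
qed


lemma Inv_vlist: "Inv (vlist n)"
proof (induction n)
  case 0 then show ?case using Inv0 by simp
next
  case (Suc n)
  obtain a b c where abc: "next_triple (vlist n) = (a,b,c)" by (metis prod_cases3)
  obtain u1 u2 u3 where u: "last (vlist n) = (u1,u2,u3)" by (metis prod_cases3)
  have "Inv (vlist n @ [(a,b,c)])" using step[OF Suc u abc] by blast
  then show ?case using abc by simp
qed

theorem theorem3:
  fixes n :: nat
  assumes "n \<ge> 1"
  shows "v1 n - v1 (n-1) \<ge> 1 \<and> v2 n - v2 (n-1) \<ge> 2 \<and> v3 n - v3 (n-1) \<ge> 3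
    \<and> v3 n - v1 n \<ge> v3 (n-1) - v1 (n-1) + 2
    \<and> Gap (D (n-1) \<inter> {Mex (D (n-1))..}) \<ge> 2
    \<and> Gap (F (n-1) \<inter> {Mex (F (n-1)) + Mex (D (n-1))..}) \<ge> 3
    \<and> Max (F n) = v3 n \<and> v3 n = v2 n + Mex (D (n-1))
    \<and> Max (D n) = v3 n - v1 n"
proof -
  obtain m where m: "n = Suc m" using assms by (cases n) auto
  obtain a b c where abc: "next_triple (vlist m) = (a,b,c)" by (metis prod_cases3)
  obtain u1 u2 u3 where u: "last (vlist m) = (u1,u2,u3)" by (metis prod_cases3)
  have S: "u1 < a \<and> u2 + 2 \<le> b \<and> u3 + 3 \<le> c \<and> u3 - u1 + 2 \<le> c - a \<and> c = b + Mex (Dset (vlist m))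
     \<and> Inv (vlist m @ [(a,b,c)])" by (rule step[OF Inv_vlist u abc])
  have vn: "v n = (a,b,c)" using m v_Suc abc by simp
  have vm: "v m = (u1,u2,u3)" using u last_vlist by simp
  have vals: "v1 n = a" "v2 n = b" "v3 n = c" "v1 m = u1" "v2 m = u2" "v3 m = u3"
    using vn vm by (auto simp: v1_def v2_def v3_def c1_def c2_def c3_def)
  have Fm: "F (n-1) = Fset (vlist m)" and Dm: "D (n-1) = Dset (vlist m)" using m F_eq D_eq by auto
  have Fn: "F n = Fset (vlist m @ [(a,b,c)])" and Dn: "D n = Dset (vlist m @ [(a,b,c)])"
    using m F_eq D_eq abc by auto
  have Im: "Inv (vlist m)" by (rule Inv_vlist)
  have gD: "\<forall>x\<in>Dset (vlist m). \<forall>y\<in>Dset (vlist m). Mex (Dset (vlist m)) \<le> x \<and> x < y \<longrightarrow> x + 2 \<le> y"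
    and gF: "\<forall>x\<in>Fset (vlist m). \<forall>y\<in>Fset (vlist m). Mex (Fset (vlist m)) + Mex (Dset (vlist m)) \<le> x \<and> x < y \<longrightarrow> x + 3 \<le> y"
    using Im u unfolding Inv_def by blast+
  have c1: "enat 2 \<le> Gap (D (n-1) \<inter> {Mex (D (n-1))..})"
    unfolding Dm by (rule Gap_ge) (use gD finite_Dset in auto)
  have c2: "enat 3 \<le> Gap (F (n-1) \<inter> {Mex (F (n-1)) + Mex (D (n-1))..})"
    unfolding Fm Dm by (rule Gap_ge) (use gF finite_Fset in auto)
  have In: "Inv (vlist m @ [(a,b,c)])" using S by blast
  have bF: "\<forall>x\<in>Fset (vlist m @ [(a,b,c)]). x \<le> c" and bD: "\<forall>x\<in>Dset (vlist m @ [(a,b,c)]). x \<le> c - a"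
    using In unfolding Inv_def by auto
  have cF: "c \<in> Fset (vlist m @ [(a,b,c)])" by (simp add: Fset_snoc c3_def)
  have cD: "c - a \<in> Dset (vlist m @ [(a,b,c)])" by (simp add: Dset_snoc c3_def c1_def)
  have MF: "Max (F n) = c" unfolding Fn
    by (rule Max_eqI) (use bF cF finite_Fset in auto)
  have MD: "Max (D n) = c - a" unfolding Dn
    by (rule Max_eqI) (use bD cD finite_Dset in auto)
  have s1: "u1 < a" "u2+2 \<le> b" "u3+3 \<le> c" "u3-u1+2 \<le> c-a" "c = b + Mex (Dset (vlist m))"
    using S by blast+
  have nm: "n - 1 = m" using m by simp
  have A: "v1 n - v1 (n-1) \<ge> 1 \<and> v2 n - v2 (n-1) \<ge> 2 \<and> v3 n - v3 (n-1) \<ge> 3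
    \<and> v3 n - v1 n \<ge> v3 (n-1) - v1 (n-1) + 2"
    unfolding nm vals using s1(1-4) by linarith
  have B: "v3 n = v2 n + Mex (D (n-1))" unfolding vals Dm using s1(5) .
  show ?thesis using A B MF MD c1 c2 vals
    by (simp add: numeral_eq_enat)
qed

end
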